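(* For $\delta, \rho \in (0,1/4)$, there exist $\nu, \nu' > 0$ depending only on $\delta,\rho$, and a finite set $\mathcal{K}$ of positive real numbers depending only on $\delta,\rho$, such that for every $n\ge 1$ and every $x \in \mathbb{S}^{n-1} \setminus \operatorname{Cons}(\delta,\rho)$, at least one of the following holds: (1) there exist $\kappa,\kappa' \in \mathcal{K}$ such that $|x_i| \le \kappa/\sqrt{n}$ for at least $\nu n$ indices $i \in [n]$, and $(\kappa+\nu')/\sqrt{n} < |x_i| \le \kappa'/\sqrt{n}$ for at least $\nu n$ indices $i\in[n]$; (2) there exist $\kappa,\kappa' \in \mathcal{K}$ such that $\kappa/\sqrt{n} < x_i < \kappa'/\sqrt{n}$ for at least $\nu n$ indices $i \in [n]$, and $-\kappa'/\sqrt{n} < x_i < -\kappa/\sqrt{n}$ for at least $\nu n$ indices $i\in[n]$.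
   Context: $\mathbb{S}^{n-1}$ is the Euclidean unit sphere in $\mathbb{R}^n$ and $[n]=\{1,\dots,n\}$. For $\delta,\rho\in(0,1)$, $\operatorname{Cons}(\delta,\rho)$ is the set of $x \in \mathbb{S}^{n-1}$ for which there exists $\lambda \in \mathbb{R}$ with $|x_i - \lambda| \le \rho/\sqrt{n}$ for at least $(1-\delta)n$ indices $i\in[n]$. *)

theory Defs
  imports "HOL-Analysis.Analysis"
begin

text \<open>Vectors in R^n are represented as functions nat => real; only the
coordinates i < n (i.e. indices 0..n-1, standing for [n]) matter.\<close>

definition unit_sphere :: "nat \<Rightarrow> (nat \<Rightarrow> real) set" where
  "unit_sphere n = {x. (\<Sum>i<n. (x i)\<^sup>2) = 1}"

definition Cons_vec :: "nat \<Rightarrow> real \<Rightarrow> real \<Rightarrow> (nat \<Rightarrow> real) set" where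
  "Cons_vec n \<delta> \<rho> = {x \<in> unit_sphere n. \<exists>c::real.
      real (card {i \<in> {..<n}. \<bar>x i - c\<bar> \<le> \<rho> / sqrt (real n)}) \<ge> (1 - \<delta>) * real n}"

end

theory Submission
  imports Defs
begin


lemma card_split_le:
  fixes f :: "nat \<Rightarrow> real"
  assumes "s \<le> t"
  shows "card {i\<in>{..<n}. f i \<le> t} = card {i\<in>{..<n}. f i \<le> s} + card {i\<in>{..<n}. s < f i \<and> f i \<le> t}"
proof -
  have "{i\<in>{..<n}. f i \<le> t} = {i\<in>{..<n}. f i \<le> s} \<union> {i\<in>{..<n}. s < f i \<and> f i \<le> t}"
    using assms by auto
  moreover have "{i\<in>{..<n}. f i \<le> s} \<inter> {i\<in>{..<n}. s < f i \<and> f i \<le> t} = {}" by auto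
  ultimately show ?thesis by (simp add: card_Un_disjoint)
qed

lemma card_compl_split:
  fixes f :: "nat \<Rightarrow> real"
  shows "card {i\<in>{..<n}. f i \<le> t} + card {i\<in>{..<n}. t < f i} = n"
proof -
  have eq: "{i\<in>{..<n}. f i \<le> t} \<union> {i\<in>{..<n}. t < f i} = {..<n}" by auto
  have "card ({i\<in>{..<n}. f i \<le> t} \<union> {i\<in>{..<n}. t < f i}) = card {i\<in>{..<n}. f i \<le> t} + card {i\<in>{..<n}. t < f i}"
    by (rule card_Un_disjoint) auto
  thus ?thesis unfolding eq by simp
qed

lemma card_mono_pred:
  fixes n :: nat
  assumes "\<And>i. i < n \<Longrightarrow> P i \<Longrightarrow> Q i"
  shows "real (card {i\<in>{..<n}. P i}) \<le> real (card {i\<in>{..<n}. Q i})"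
proof (rule of_nat_mono, rule card_mono)
  show "finite {i\<in>{..<n}. Q i}" by simp
  show "{i\<in>{..<n}. P i} \<subseteq> {i\<in>{..<n}. Q i}" using assms by auto
qed

lemma bins_sum_d:
  fixes f :: "nat \<Rightarrow> real" and h c :: real
  assumes "h \<ge> 0"
    and "\<And>j. a \<le> j \<Longrightarrow> j < a + d \<Longrightarrow> real (card {i\<in>{..<n}. real j * h < f i \<and> f i \<le> real (j+1) * h}) \<le> c"
  shows "real (card {i\<in>{..<n}. f i \<le> real (a + d) * h}) \<le> real (card {i\<in>{..<n}. f i \<le> real a * h}) + real d * c"
  using assms(2)
proof (induction d)
  case 0
  then show ?case by simp
next
  case (Suc d)
  have le: "real (a + d) * h \<le> real (a + d + 1) * h" using assms(1) by (intro mult_right_mono) auto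
  have eq: "card {i\<in>{..<n}. f i \<le> real (a + d + 1) * h} = card {i\<in>{..<n}. f i \<le> real (a + d) * h}
      + card {i\<in>{..<n}. real (a + d) * h < f i \<and> f i \<le> real (a + d + 1) * h}"
    by (rule card_split_le[OF le])
  have b: "real (card {i\<in>{..<n}. real (a + d) * h < f i \<and> f i \<le> real (a + d + 1) * h}) \<le> c"
    using Suc.prems[of "a + d"] by simp
  have ih: "real (card {i\<in>{..<n}. f i \<le> real (a + d) * h}) \<le> real (card {i\<in>{..<n}. f i \<le> real a * h}) + real d * c"
    using Suc.IH Suc.prems by simp
  have e2: "real (Suc d) * c = real d * c + c" by (simp add: algebra_simps)
  have e3: "a + Suc d = a + d + 1" by simp
  show ?case unfolding e3 e2 using eq b ih by (simp only: of_nat_add)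
qed

lemma bins_sum:
  fixes f :: "nat \<Rightarrow> real" and h c :: real
  assumes "h \<ge> 0" "a \<le> b"
    and "\<And>j. a \<le> j \<Longrightarrow> j < b \<Longrightarrow> real (card {i\<in>{..<n}. real j * h < f i \<and> f i \<le> real (j+1) * h}) \<le> c"
  shows "real (card {i\<in>{..<n}. f i \<le> real b * h}) \<le> real (card {i\<in>{..<n}. f i \<le> real a * h}) + real (b - a) * c"
proof -
  have bb: "a + (b - a) = b" using assms(2) by simp
  have "\<And>j. a \<le> j \<Longrightarrow> j < a + (b - a) \<Longrightarrow> real (card {i\<in>{..<n}. real j * h < f i \<and> f i \<le> real (j+1) * h}) \<le> c"
    using assms(3) by (simp only: bb)
  from bins_sum_d[of h a "b - a", OF assms(1) this] show ?thesis by (simp only: bb)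
qed

lemma tail_bound:
  fixes y :: "nat \<Rightarrow> real"
  assumes "M \<ge> 0"
  shows "real (card {i\<in>{..<n}. M < \<bar>y i\<bar>}) * M^2 \<le> (\<Sum>i<n. (y i)^2)"
proof -
  let ?A = "{i\<in>{..<n}. M < \<bar>y i\<bar>}"
  have "real (card ?A) * M^2 = (\<Sum>i\<in>?A. M^2)" by simp
  also have "\<dots> \<le> (\<Sum>i\<in>?A. (y i)^2)"
  proof (rule sum_mono)
    fix i assume "i \<in> ?A"
    hence "M \<le> \<bar>y i\<bar>" by auto
    hence "M^2 \<le> \<bar>y i\<bar>^2" using assms by (intro power_mono) auto
    thus "M^2 \<le> (y i)^2" by simp
  qed
  also have "\<dots> \<le> (\<Sum>i<n. (y i)^2)" by (intro sum_mono2) auto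
  finally show ?thesis .
qed



lemma arith_aux:
  fixes S P Q n dn A m :: real
  assumes "S \<ge> n - dn/4 - 2*A - m" "S = P + Q" "Q < n - dn" "A + m = dn/4" "dn > 0"
  shows "m \<le> P"
  using assms by linarith

lemma abs_band:
  fixes v a b :: real
  assumes "a \<ge> 0"
  shows "(a < \<bar>v\<bar> \<and> \<bar>v\<bar> \<le> b) \<longleftrightarrow> (a < v \<and> v \<le> b) \<or> (- b \<le> v \<and> v < - a)"
  using assms by (cases "v \<ge> 0") auto

lemma near_aux:
  fixes a h v \<rho> :: real
  assumes "a < v" "v \<le> a + 2*h" "h \<le> \<rho>" "h > 0"
  shows "\<bar>v - (a + h)\<bar> \<le> \<rho>"
  using assms by (auto simp: abs_le_iff)

lemma near_neg:
  fixes a h v \<rho> :: real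
  assumes "- (a + 2*h) \<le> v" "v < - a" "h \<le> \<rho>" "h > 0"
  shows "\<bar>v - (- (a + h))\<bar> \<le> \<rho>"
  using assms by (auto simp: abs_le_iff)

lemma core:
  fixes \<delta> \<rho> :: real and y :: "nat \<Rightarrow> real" and n N :: nat and h \<nu> :: real
  assumes d: "0 < \<delta>" "\<delta> < 1/4" and r: "0 < \<rho>" "\<rho> < 1/4"
    and hdef: "h = \<rho> / 4"
    and Ndef: "N = nat \<lceil>2 / (h * sqrt \<delta>)\<rceil> + 4"
    and nudef: "\<nu> = \<delta> / (4 * (real N + 1))"
    and n1: "n \<ge> 1"
    and sph: "(\<Sum>i<n. (y i)^2) = real n"
    and nc: "\<And>c. real (card {i\<in>{..<n}. \<bar>y i - c\<bar> \<le> \<rho>}) < (1 - \<delta>) * real n"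
  shows "(\<exists>\<kappa>\<in>(\<lambda>j. real j * h) ` {1..N+3}. \<exists>\<kappa>'\<in>(\<lambda>j. real j * h) ` {1..N+3}.
         real (card {i \<in> {..<n}. \<bar>y i\<bar> \<le> \<kappa>}) \<ge> \<nu> * real n \<and>
         real (card {i \<in> {..<n}. \<kappa> + h < \<bar>y i\<bar> \<and> \<bar>y i\<bar> \<le> \<kappa>'}) \<ge> \<nu> * real n)
      \<or>
      (\<exists>\<kappa>\<in>(\<lambda>j. real j * h) ` {1..N+3}. \<exists>\<kappa>'\<in>(\<lambda>j. real j * h) ` {1..N+3}.
         real (card {i \<in> {..<n}. \<kappa> < y i \<and> y i < \<kappa>'}) \<ge> \<nu> * real n \<and>
         real (card {i \<in> {..<n}. - \<kappa>' < y i \<and> y i < - \<kappa>}) \<ge> \<nu> * real n)"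
proof -
  let ?K = "(\<lambda>j. real j * h) ` {1..N+3}"
  define F where "F t = real (card {i\<in>{..<n}. \<bar>y i\<bar> \<le> t})" for t
  define b where "b j = real (card {i\<in>{..<n}. real j * h < \<bar>y i\<bar> \<and> \<bar>y i\<bar> \<le> real (j+1) * h})" for j :: nat
  define m where "m = \<nu> * real n"
  have hpos: "h > 0" using hdef r by simp
  have npos: "real n > 0" using n1 by simp
  have mpos: "m > 0" unfolding m_def nudef using d npos by simp
  have mN: "real N * m + m = \<delta> * real n / 4"
  proof -
    have "(real N + 1) * \<nu> = \<delta> / 4" unfolding nudef by (simp add: field_simps)
    hence "(real N + 1) * \<nu> * real n = \<delta> * real n / 4" by simp
    thus ?thesis unfolding m_def by (simp add: algebra_simps)
  qed
  have e1: "(1 - \<delta>) * real n = real n - \<delta> * real n" by (simp add: algebra_simps)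
  have e2: "(1 - \<delta>/4) * real n = real n - \<delta> * real n / 4" by (simp add: algebra_simps)
  have dn: "\<delta> * real n > 0" using d npos by simp
  have Fmono: "F s \<le> F t" if "s \<le> t" for s t
    unfolding F_def by (rule card_mono_pred) (use that in auto)
  have F4: "F (real 4 * h) < (1 - \<delta>) * real n"
  proof -
    have "F (real 4 * h) = real (card {i\<in>{..<n}. \<bar>y i - 0\<bar> \<le> \<rho>})"
      unfolding F_def hdef by simp
    thus ?thesis using nc[of 0] by simp
  qed
  have FN: "F (real N * h) \<ge> (1 - \<delta>/4) * real n"
  proof -
    have sd: "sqrt \<delta> > 0" using d by simp
    have "real N \<ge> 2 / (h * sqrt \<delta>)" unfolding Ndef
      by (smt (verit) of_nat_add of_nat_nat real_nat_ceiling_ge of_nat_0_le_iff)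
    hence "real N * h \<ge> 2 / (h * sqrt \<delta>) * h" using hpos by (intro mult_right_mono) auto
    hence NH: "real N * h \<ge> 2 / sqrt \<delta>" using hpos by simp
    have "(2 / sqrt \<delta>)^2 \<le> (real N * h)^2" using NH sd by (intro power_mono) auto
    moreover have "(2 / sqrt \<delta>)^2 = 4 / \<delta>" using d by (simp add: power_divide)
    ultimately have M2: "4 / \<delta> \<le> (real N * h)^2" by simp
    let ?T = "real (card {i\<in>{..<n}. real N * h < \<bar>y i\<bar>})"
    have "?T * (real N * h)^2 \<le> real n" using tail_bound[of "real N * h" n y] hpos sph by simp
    moreover have "?T * (4 / \<delta>) \<le> ?T * (real N * h)^2" using M2 by (intro mult_left_mono) auto
    ultimately have "?T * (4 / \<delta>) \<le> real n" by linarith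
    hence T: "?T \<le> \<delta> * real n / 4" using d by (simp add: field_simps)
    have "F (real N * h) + ?T = real n"
      unfolding F_def using card_compl_split[of n "\<lambda>i. \<bar>y i\<bar>" "real N * h"]
      by (metis of_nat_add)
    thus ?thesis using T by (simp add: algebra_simps)
  qed
  have FN': "real n - \<delta> * real n / 4 \<le> F (real N * h)" using FN by (simp only: e2)
  have F4': "F (real 4 * h) < real n - \<delta> * real n" using F4 by (simp only: e1)
  have split: "F t = F s + real (card {i\<in>{..<n}. s < \<bar>y i\<bar> \<and> \<bar>y i\<bar> \<le> t})" if "s \<le> t" for s t
    unfolding F_def using card_split_le[OF that, of n "\<lambda>i. \<bar>y i\<bar>"] by simp
  have bsum: "F (real B * h) \<le> F (real A * h) + real (B - A) * m"
    if "A \<le> B" "\<And>j. A \<le> j \<Longrightarrow> j < B \<Longrightarrow> b j \<le> m" for A B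
    unfolding F_def using bins_sum[of h A B n "\<lambda>i. \<bar>y i\<bar>" m] hpos that unfolding b_def by auto
  let ?P = "\<lambda>j. 1 \<le> j \<and> j < N \<and> b j \<ge> m"
  have exP: "\<exists>j. ?P j"
  proof (rule ccontr)
    assume "\<not> (\<exists>j. ?P j)"
    hence "\<And>j. 1 \<le> j \<Longrightarrow> j < N \<Longrightarrow> b j \<le> m" by force
    hence "F (real N * h) \<le> F (real 1 * h) + real (N - 1) * m" using Ndef by (intro bsum) auto
    moreover have "real (N - 1) * m \<le> real N * m" using mpos by (intro mult_right_mono) auto
    moreover have "F (real 1 * h) \<le> F (real 4 * h)" using hpos by (intro Fmono) auto
    ultimately have "F (real N * h) < real n - \<delta> * real n + real N * m" using F4' by linarith
    thus False using FN' mN mpos e1 F4' dn by argo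
  qed
  then obtain j0 where j0: "?P j0" and j0min: "\<And>k. k < j0 \<Longrightarrow> \<not> ?P k"
    using exists_least_iff[of ?P] by blast
  show ?thesis
  proof (cases "\<exists>k. j0 + 2 \<le> k \<and> k < N \<and> b k \<ge> m")
    case True
    then obtain k where k: "j0 + 2 \<le> k" "k < N" "b k \<ge> m" by blast
    have "real (j0+1) * h \<in> ?K" using j0  by (auto intro!: rev_image_eqI[of "j0+1"])
    moreover have "real (k+1) * h \<in> ?K" using k  by (auto intro!: rev_image_eqI[of "k+1"])
    moreover have "real (card {i \<in> {..<n}. \<bar>y i\<bar> \<le> real (j0+1) * h}) \<ge> \<nu> * real n"
    proof -
      have "b j0 \<le> F (real (j0+1) * h)" unfolding b_def F_def
        by (rule card_mono_pred) auto
      thus ?thesis using j0 unfolding F_def m_def by linarith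
    qed
    moreover have "real (card {i \<in> {..<n}. real (j0+1) * h + h < \<bar>y i\<bar> \<and> \<bar>y i\<bar> \<le> real (k+1) * h}) \<ge> \<nu> * real n"
    proof -
      have "real (j0+2) * h \<le> real k * h" using k hpos by (intro mult_right_mono) auto
      moreover have "real (j0+1) * h + h = real (j0+2) * h" by (simp add: algebra_simps)
      ultimately have "real (j0+1) * h + h \<le> real k * h" by linarith
      hence "b k \<le> real (card {i \<in> {..<n}. real (j0+1) * h + h < \<bar>y i\<bar> \<and> \<bar>y i\<bar> \<le> real (k+1) * h})"
        unfolding b_def by (intro card_mono_pred) auto
      thus ?thesis using k unfolding m_def by linarith
    qed
    ultimately show ?thesis by blast
  next
    case False
    hence light: "\<And>k. j0 + 2 \<le> k \<Longrightarrow> k < N \<Longrightarrow> b k \<le> m" by force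
    have a: "F (real N * h) \<le> F (real (j0+2) * h) + real N * m"
    proof (cases "j0 + 2 \<le> N")
      case True
      hence "F (real N * h) \<le> F (real (j0+2) * h) + real (N - (j0+2)) * m"
        using light by (intro bsum) auto
      moreover have "real (N - (j0+2)) * m \<le> real N * m" using mpos by (intro mult_right_mono) auto
      ultimately show ?thesis by linarith
    next
      case False
      hence "F (real N * h) \<le> F (real (j0+2) * h)" using hpos by (intro Fmono) auto
      moreover have "real N * m \<ge> 0" using mpos by simp
      ultimately show ?thesis by linarith
    qed
    show ?thesis
    proof (cases "j0 \<le> 2")
      case True
      hence "F (real (j0+2) * h) \<le> F (real 4 * h)" using hpos by (intro Fmono) auto
      hence "F (real N * h) < real n - \<delta> * real n + real N * m" using a F4' by linarith
      hence False using FN' mN mpos dn by argo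
      thus ?thesis ..
    next
      case j03: False
      show ?thesis
      proof (cases "F h \<ge> m")
        case True
        have "real 1 * h \<in> ?K"  by (auto intro!: rev_image_eqI[of "1"])
        moreover have "real (j0+1) * h \<in> ?K" using j0  by (auto intro!: rev_image_eqI[of "j0+1"])
        moreover have "real (card {i \<in> {..<n}. \<bar>y i\<bar> \<le> real 1 * h}) \<ge> \<nu> * real n"
          using True unfolding F_def m_def by simp
        moreover have "real (card {i \<in> {..<n}. real 1 * h + h < \<bar>y i\<bar> \<and> \<bar>y i\<bar> \<le> real (j0+1) * h}) \<ge> \<nu> * real n"
        proof -
          have "real 2 * h \<le> real j0 * h" using j03 hpos by (intro mult_right_mono) auto
          hence "b j0 \<le> real (card {i \<in> {..<n}. real 1 * h + h < \<bar>y i\<bar> \<and> \<bar>y i\<bar> \<le> real (j0+1) * h})"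
            unfolding b_def by (intro card_mono_pred) auto
          thus ?thesis using j0 unfolding m_def by linarith
        qed
        ultimately show ?thesis by blast
      next
        case Fh: False
        have "F (real j0 * h) \<le> F (real 1 * h) + real (j0 - 1) * m"
          using j0 j0min by (intro bsum) force+
        moreover have "real (j0 - 1) * m \<le> real N * m" using mpos j0 by (intro mult_right_mono) auto
        ultimately have Fj0: "F (real j0 * h) \<le> F h + real N * m" by simp
        let ?S = "real (card {i\<in>{..<n}. real j0 * h < \<bar>y i\<bar> \<and> \<bar>y i\<bar> \<le> real (j0+2) * h})"
        let ?Pc = "real (card {i\<in>{..<n}. real j0 * h < y i \<and> y i \<le> real (j0+2) * h})"
        let ?Qc = "real (card {i\<in>{..<n}. - (real (j0+2) * h) \<le> y i \<and> y i < - (real j0 * h)})"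
        have "real j0 * h \<le> real (j0+2) * h" using hpos by (intro mult_right_mono) auto
        from split[OF this] have Sx: "F (real (j0+2) * h) = F (real j0 * h) + ?S" .
        have SPQ: "?S = ?Pc + ?Qc"
        proof -
          have j0h: "real j0 * h \<ge> 0" using hpos by simp
          have "{i\<in>{..<n}. real j0 * h < \<bar>y i\<bar> \<and> \<bar>y i\<bar> \<le> real (j0+2) * h} =
              {i\<in>{..<n}. real j0 * h < y i \<and> y i \<le> real (j0+2) * h} \<union>
              {i\<in>{..<n}. - (real (j0+2) * h) \<le> y i \<and> y i < - (real j0 * h)}" by (rule set_eqI) (simp add: abs_band[OF j0h] conj_disj_distribL)
          moreover have "{i\<in>{..<n}. real j0 * h < y i \<and> y i \<le> real (j0+2) * h} \<inter>
              {i\<in>{..<n}. - (real (j0+2) * h) \<le> y i \<and> y i < - (real j0 * h)} = {}" using j0h by auto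
          ultimately show ?thesis by (simp add: card_Un_disjoint)
        qed
        have eqa: "real (j0+1) * h = real j0 * h + h" by (simp add: distrib_right)
        have eqb: "real (j0+2) * h = real j0 * h + 2 * h" by (simp add: distrib_right)
        have hr: "h \<le> \<rho>" using hdef hpos by simp
        have eqc: "real (j0+2) * h < real (j0+3) * h" using hpos by simp
        have Pc: "?Pc < (1 - \<delta>) * real n"
        proof -
          have "?Pc \<le> real (card {i\<in>{..<n}. \<bar>y i - real (j0+1) * h\<bar> \<le> \<rho>})"
            unfolding eqa eqb by (intro card_mono_pred) (use near_aux[OF _ _ hr hpos] in blast)
          thus ?thesis using nc by (meson le_less_trans)
        qed
        have Qc: "?Qc < (1 - \<delta>) * real n"
        proof -
          have "?Qc \<le> real (card {i\<in>{..<n}. \<bar>y i - (- (real (j0+1) * h))\<bar> \<le> \<rho>})"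
            unfolding eqa eqb by (intro card_mono_pred) (use near_neg[OF _ _ hr hpos] in blast)
          thus ?thesis using nc by (meson le_less_trans)
        qed
        have Fhl: "F h < m" using Fh by simp
        have S_lb: "?S \<ge> real n - \<delta> * real n / 4 - 2 * (real N * m) - m"
          using Sx Fj0 Fhl a FN' by linarith
        have Qc': "?Qc < real n - \<delta> * real n" using Qc by (simp only: e1)
        have Pc': "?Pc < real n - \<delta> * real n" using Pc by (simp only: e1)
        have Pm: "?Pc \<ge> m" by (rule arith_aux[OF S_lb SPQ Qc' mN dn])
        have SPQ': "?S = ?Qc + ?Pc" using SPQ by simp
        have Qm: "?Qc \<ge> m" by (rule arith_aux[OF S_lb SPQ' Pc' mN dn])
        have "real j0 * h \<in> ?K" using j0  by (auto intro!: rev_image_eqI[of "j0"])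
        moreover have "real (j0+3) * h \<in> ?K" using j0  by (auto intro!: rev_image_eqI[of "j0+3"])
        moreover have "real (card {i \<in> {..<n}. real j0 * h < y i \<and> y i < real (j0+3) * h}) \<ge> \<nu> * real n"
        proof -
          have "?Pc \<le> real (card {i \<in> {..<n}. real j0 * h < y i \<and> y i < real (j0+3) * h})"
            using eqc by (intro card_mono_pred) linarith
          thus ?thesis using Pm unfolding m_def by linarith
        qed
        moreover have "real (card {i \<in> {..<n}. - (real (j0+3) * h) < y i \<and> y i < - (real j0 * h)}) \<ge> \<nu> * real n"
        proof -
          have "?Qc \<le> real (card {i \<in> {..<n}. - (real (j0+3) * h) < y i \<and> y i < - (real j0 * h)})"
            using eqc by (intro card_mono_pred) linarith
          thus ?thesis using Qm unfolding m_def by linarith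
        qed
        ultimately show ?thesis by blast
      qed
    qed
  qed
qed


theorem lemma2p3:
  fixes \<delta> \<rho> :: real
  assumes "0 < \<delta>" "\<delta> < 1/4" "0 < \<rho>" "\<rho> < 1/4"
  shows "\<exists>\<nu> \<nu>' :: real. \<exists>K :: real set. \<nu> > 0 \<and> \<nu>' > 0 \<and> finite K \<and> (\<forall>k\<in>K. k > 0) \<and>
    (\<forall>n::nat. \<forall>x. n \<ge> 1 \<longrightarrow> x \<in> unit_sphere n - Cons_vec n \<delta> \<rho> \<longrightarrow>
      (\<exists>\<kappa>\<in>K. \<exists>\<kappa>'\<in>K.
         real (card {i \<in> {..<n}. \<bar>x i\<bar> \<le> \<kappa> / sqrt (real n)}) \<ge> \<nu> * real n \<and>
         real (card {i \<in> {..<n}. (\<kappa> + \<nu>') / sqrt (real n) < \<bar>x i\<bar> \<and> \<bar>x i\<bar> \<le> \<kappa>' / sqrt (real n)}) \<ge> \<nu> * real n)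
      \<or>
      (\<exists>\<kappa>\<in>K. \<exists>\<kappa>'\<in>K.
         real (card {i \<in> {..<n}. \<kappa> / sqrt (real n) < x i \<and> x i < \<kappa>' / sqrt (real n)}) \<ge> \<nu> * real n \<and>
         real (card {i \<in> {..<n}. - \<kappa>' / sqrt (real n) < x i \<and> x i < - \<kappa> / sqrt (real n)}) \<ge> \<nu> * real n))"
proof -
  define h where "h = \<rho> / 4"
  define N where "N = nat \<lceil>2 / (h * sqrt \<delta>)\<rceil> + 4"
  define \<nu> where "\<nu> = \<delta> / (4 * (real N + 1))"
  define K where "K = (\<lambda>j. real j * h) ` {1..N+3}"
  have hpos: "h > 0" using assms unfolding h_def by simp
  have nupos: "\<nu> > 0" using assms unfolding \<nu>_def by simp
  have finK: "finite K" unfolding K_def by simp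
  have Kpos: "\<forall>k\<in>K. k > 0" unfolding K_def using hpos by auto
  have main: "\<forall>n::nat. \<forall>x. n \<ge> 1 \<longrightarrow> x \<in> unit_sphere n - Cons_vec n \<delta> \<rho> \<longrightarrow>
      (\<exists>\<kappa>\<in>K. \<exists>\<kappa>'\<in>K.
         real (card {i \<in> {..<n}. \<bar>x i\<bar> \<le> \<kappa> / sqrt (real n)}) \<ge> \<nu> * real n \<and>
         real (card {i \<in> {..<n}. (\<kappa> + h) / sqrt (real n) < \<bar>x i\<bar> \<and> \<bar>x i\<bar> \<le> \<kappa>' / sqrt (real n)}) \<ge> \<nu> * real n)
      \<or>
      (\<exists>\<kappa>\<in>K. \<exists>\<kappa>'\<in>K.
         real (card {i \<in> {..<n}. \<kappa> / sqrt (real n) < x i \<and> x i < \<kappa>' / sqrt (real n)}) \<ge> \<nu> * real n \<and>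
         real (card {i \<in> {..<n}. - \<kappa>' / sqrt (real n) < x i \<and> x i < - \<kappa> / sqrt (real n)}) \<ge> \<nu> * real n)"
  proof (intro allI impI)
    fix n :: nat and x :: "nat \<Rightarrow> real"
    assume n1: "n \<ge> 1" and xin: "x \<in> unit_sphere n - Cons_vec n \<delta> \<rho>"
    define s where "s = sqrt (real n)"
    have spos: "s > 0" using n1 unfolding s_def by simp
    have s2: "s^2 = real n" unfolding s_def by simp
    define y where "y i = s * x i" for i
    have xs: "(\<Sum>i<n. (x i)^2) = 1" using xin unfolding unit_sphere_def by simp
    have sph: "(\<Sum>i<n. (y i)^2) = real n"
    proof -
      have "(\<Sum>i<n. (y i)^2) = s^2 * (\<Sum>i<n. (x i)^2)"
        unfolding y_def by (simp add: power_mult_distrib sum_distrib_left)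
      thus ?thesis using xs s2 by simp
    qed
    have nc: "real (card {i\<in>{..<n}. \<bar>y i - c\<bar> \<le> \<rho>}) < (1 - \<delta>) * real n" for c
    proof -
      have "x \<notin> Cons_vec n \<delta> \<rho>" using xin by simp
      hence "\<not> (real (card {i \<in> {..<n}. \<bar>x i - c / s\<bar> \<le> \<rho> / s}) \<ge> (1 - \<delta>) * real n)"
        using xin unfolding Cons_vec_def s_def by auto
      moreover have "{i \<in> {..<n}. \<bar>x i - c / s\<bar> \<le> \<rho> / s} = {i\<in>{..<n}. \<bar>y i - c\<bar> \<le> \<rho>}"
      proof -
        have "\<bar>x i - c / s\<bar> \<le> \<rho> / s \<longleftrightarrow> \<bar>y i - c\<bar> \<le> \<rho>" for i
        proof -
          have "y i - c = s * (x i - c / s)" unfolding y_def using spos by (simp add: field_simps)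
          hence "\<bar>y i - c\<bar> = s * \<bar>x i - c / s\<bar>" using spos by (simp add: abs_mult)
          thus ?thesis using spos by (simp add: pos_le_divide_eq mult.commute)
        qed
        thus ?thesis by auto
      qed
      ultimately show ?thesis by simp
    qed
    have C: "(\<exists>\<kappa>\<in>K. \<exists>\<kappa>'\<in>K.
         real (card {i \<in> {..<n}. \<bar>y i\<bar> \<le> \<kappa>}) \<ge> \<nu> * real n \<and>
         real (card {i \<in> {..<n}. \<kappa> + h < \<bar>y i\<bar> \<and> \<bar>y i\<bar> \<le> \<kappa>'}) \<ge> \<nu> * real n)
      \<or>
      (\<exists>\<kappa>\<in>K. \<exists>\<kappa>'\<in>K.
         real (card {i \<in> {..<n}. \<kappa> < y i \<and> y i < \<kappa>'}) \<ge> \<nu> * real n \<and>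
         real (card {i \<in> {..<n}. - \<kappa>' < y i \<and> y i < - \<kappa>}) \<ge> \<nu> * real n)"
      unfolding K_def
      by (rule core[OF assms h_def N_def \<nu>_def n1 sph nc])
    have e1: "\<bar>y i\<bar> \<le> a \<longleftrightarrow> \<bar>x i\<bar> \<le> a / s" for a i
      unfolding y_def using spos by (simp add: abs_mult pos_le_divide_eq mult.commute)
    have e2: "a < \<bar>y i\<bar> \<longleftrightarrow> a / s < \<bar>x i\<bar>" for a i
      unfolding y_def using spos by (simp add: abs_mult pos_divide_less_eq mult.commute)
    have e3: "a < y i \<longleftrightarrow> a / s < x i" for a i
      unfolding y_def using spos by (simp add: pos_divide_less_eq mult.commute)
    have e4: "y i < a \<longleftrightarrow> x i < a / s" for a i
      unfolding y_def using spos by (simp add: pos_less_divide_eq mult.commute)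
    have e5: "- a / s = - (a / s)" for a by simp
    show "(\<exists>\<kappa>\<in>K. \<exists>\<kappa>'\<in>K.
         real (card {i \<in> {..<n}. \<bar>x i\<bar> \<le> \<kappa> / sqrt (real n)}) \<ge> \<nu> * real n \<and>
         real (card {i \<in> {..<n}. (\<kappa> + h) / sqrt (real n) < \<bar>x i\<bar> \<and> \<bar>x i\<bar> \<le> \<kappa>' / sqrt (real n)}) \<ge> \<nu> * real n)
      \<or>
      (\<exists>\<kappa>\<in>K. \<exists>\<kappa>'\<in>K.
         real (card {i \<in> {..<n}. \<kappa> / sqrt (real n) < x i \<and> x i < \<kappa>' / sqrt (real n)}) \<ge> \<nu> * real n \<and>
         real (card {i \<in> {..<n}. - \<kappa>' / sqrt (real n) < x i \<and> x i < - \<kappa> / sqrt (real n)}) \<ge> \<nu> * real n)"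
      using C unfolding s_def[symmetric] e1 e2 e3 e4 e5 .
  qed
  show ?thesis
    by (rule exI[of _ \<nu>], rule exI[of _ h], rule exI[of _ K]) (use nupos hpos finK Kpos main in blast)
qed

end
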